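(* Let $n\geq 2$ and let $X$ be any finite subset of $\mathbb{R}^n$. Then there is a polynomial vector field $g:\mathbb{R}^n\rightarrow \mathbb{R}^n$ such that every point of $X$ is an asymptotically stable equilibrium of $\dot x = g(x)$, and $g$ has no equilibria (zeros) outside $X$. *)

theory Defs
  imports "HOL-Analysis.Analysis"
begin

inductive poly_fun :: "(real ^ 'n \<Rightarrow> real) \<Rightarrow> bool" where
  const: "poly_fun (\<lambda>x. c)"
| coord: "poly_fun (\<lambda>x. x $ i)"
| add: "poly_fun f \<Longrightarrow> poly_fun g \<Longrightarrow> poly_fun (\<lambda>x. f x + g x)"
| mult: "poly_fun f \<Longrightarrow> poly_fun g \<Longrightarrow> poly_fun (\<lambda>x. f x * g x)"

definition poly_vector_field :: "(real ^ 'n \<Rightarrow> real ^ 'n) \<Rightarrow> bool" where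
  "poly_vector_field g \<longleftrightarrow> (\<forall>i. poly_fun (\<lambda>x. g x $ i))"

definition ode_solution_on :: "(real ^ 'n \<Rightarrow> real ^ 'n) \<Rightarrow> (real \<Rightarrow> real ^ 'n) \<Rightarrow> real set \<Rightarrow> bool" where
  "ode_solution_on g x S \<longleftrightarrow> (\<forall>t\<in>S. (x has_vector_derivative g (x t)) (at t within S))"

definition lyapunov_stable :: "(real ^ 'n \<Rightarrow> real ^ 'n) \<Rightarrow> real ^ 'n \<Rightarrow> bool" where
  "lyapunov_stable g p \<longleftrightarrow>
     (\<forall>\<epsilon>>0. \<exists>\<delta>>0. \<forall>x0. dist x0 p < \<delta> \<longrightarrow>
        (\<exists>x. x 0 = x0 \<and> ode_solution_on g x {0..}) \<and>
        (\<forall>x T. 0 \<le> T \<longrightarrow> x 0 = x0 \<longrightarrow> ode_solution_on g x {0..T} \<longrightarrow>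
              (\<forall>t\<in>{0..T}. dist (x t) p < \<epsilon>)))"

definition attractive :: "(real ^ 'n \<Rightarrow> real ^ 'n) \<Rightarrow> real ^ 'n \<Rightarrow> bool" where
  "attractive g p \<longleftrightarrow>
     (\<exists>\<eta>>0. \<forall>x. dist (x 0) p < \<eta> \<longrightarrow> ode_solution_on g x {0..} \<longrightarrow>
        (x \<longlongrightarrow> p) at_top)"

definition asymptotically_stable_equilibrium :: "(real ^ 'n \<Rightarrow> real ^ 'n) \<Rightarrow> real ^ 'n \<Rightarrow> bool" where
  "asymptotically_stable_equilibrium g p \<longleftrightarrow> g p = 0 \<and> lyapunov_stable g p \<and> attractive g p"

end

theory Submission
  imports Defs "HOL-Computational_Algebra.Polynomial"
begin


lemma poly_fun_neg: "poly_fun f \<Longrightarrow> poly_fun (\<lambda>x. - f x)"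
  using poly_fun.mult[OF poly_fun.const[of "-1"]] by simp

lemma poly_fun_diff: "poly_fun f \<Longrightarrow> poly_fun g \<Longrightarrow> poly_fun (\<lambda>x. f x - g x)"
  using poly_fun.add[OF _ poly_fun_neg] by simp

lemma poly_fun_cmult: "poly_fun f \<Longrightarrow> poly_fun (\<lambda>x. c * f x)"
  by (rule poly_fun.mult[OF poly_fun.const])

lemma poly_fun_sum: "finite A \<Longrightarrow> (\<And>a. a \<in> A \<Longrightarrow> poly_fun (f a)) \<Longrightarrow> poly_fun (\<lambda>x. \<Sum>a\<in>A. f a x)"
  by (induction A rule: finite_induct) (auto intro: poly_fun.intros)

lemma poly_fun_prod: "finite A \<Longrightarrow> (\<And>a. a \<in> A \<Longrightarrow> poly_fun (f a)) \<Longrightarrow> poly_fun (\<lambda>x. \<Prod>a\<in>A. f a x)"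
  by (induction A rule: finite_induct) (auto intro: poly_fun.intros)

lemma poly_fun_poly: "poly_fun f \<Longrightarrow> poly_fun (\<lambda>x. poly P (f x))"
  by (induction P rule: pCons_induct) (auto intro: poly_fun.intros)

lemma poly_fun_inner: "poly_fun (\<lambda>x::real^'n. c \<bullet> x)"
  unfolding inner_vec_def by (auto intro!: poly_fun_sum poly_fun_cmult poly_fun.coord)

definition cpf :: "(real^'n \<Rightarrow> complex) \<Rightarrow> bool" where
  "cpf F \<longleftrightarrow> poly_fun (\<lambda>x. Re (F x)) \<and> poly_fun (\<lambda>x. Im (F x))"

lemma cpf_const: "cpf (\<lambda>x. c)" by (simp add: cpf_def poly_fun.const)
lemma cpf_of_real: "poly_fun f \<Longrightarrow> cpf (\<lambda>x. complex_of_real (f x))"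
  by (simp add: cpf_def poly_fun.const)
lemma cpf_add: "cpf F \<Longrightarrow> cpf G \<Longrightarrow> cpf (\<lambda>x. F x + G x)"
  by (simp add: cpf_def poly_fun.add)
lemma cpf_diff: "cpf F \<Longrightarrow> cpf G \<Longrightarrow> cpf (\<lambda>x. F x - G x)"
  by (simp add: cpf_def poly_fun_diff)
lemma cpf_mult: "cpf F \<Longrightarrow> cpf G \<Longrightarrow> cpf (\<lambda>x. F x * G x)"
  by (simp add: cpf_def poly_fun_diff poly_fun.add poly_fun.mult)
lemma cpf_prod: "finite A \<Longrightarrow> (\<And>a. a \<in> A \<Longrightarrow> cpf (f a)) \<Longrightarrow> cpf (\<lambda>x. \<Prod>a\<in>A. f a x)"
  by (induction A rule: finite_induct) (auto intro: cpf_mult cpf_const)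

lemma poly_fun_lip:
  fixes f :: "real^'n \<Rightarrow> real"
  assumes "poly_fun f"
  shows "\<exists>L M. L \<ge> 0 \<and> (\<forall>x\<in>cball p r. \<forall>y\<in>cball p r. \<bar>f x - f y\<bar> \<le> L * norm (x - y))
           \<and> (\<forall>x\<in>cball p r. \<bar>f x\<bar> \<le> M)"
  using assms
proof (induction f rule: poly_fun.induct)
  case (const c)
  then show ?case by (intro exI[of _ 0] exI[of _ "\<bar>c\<bar>"]) auto
next
  case (coord i)
  have "\<forall>x\<in>cball p r. \<forall>y\<in>cball p r. \<bar>x $ i - y $ i\<bar> \<le> 1 * norm (x - y)"
    using component_le_norm_cart by (metis mult_1 vector_minus_component)
  moreover have "\<forall>x\<in>cball p r. \<bar>x $ i\<bar> \<le> norm p + r"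
  proof
    fix x :: "real^'n" assume "x \<in> cball p r"
    then have "norm x \<le> norm p + r"
      by (metis add.commute dist_norm mem_cball norm_minus_commute norm_triangle_sub order_trans add_left_mono)
    then show "\<bar>x $ i\<bar> \<le> norm p + r" using component_le_norm_cart[of x i] by simp
  qed
  ultimately show ?case by (intro exI[of _ 1] exI[of _ "norm p + r"]) simp
next
  case (add f g)
  then obtain L1 M1 L2 M2 where A: "L1 \<ge> 0" "\<forall>x\<in>cball p r. \<forall>y\<in>cball p r. \<bar>f x - f y\<bar> \<le> L1 * norm (x - y)"
      "\<forall>x\<in>cball p r. \<bar>f x\<bar> \<le> M1" "L2 \<ge> 0" "\<forall>x\<in>cball p r. \<forall>y\<in>cball p r. \<bar>g x - g y\<bar> \<le> L2 * norm (x - y)"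
      "\<forall>x\<in>cball p r. \<bar>g x\<bar> \<le> M2" by blast
  have "\<forall>x\<in>cball p r. \<forall>y\<in>cball p r. \<bar>f x + g x - (f y + g y)\<bar> \<le> (L1 + L2) * norm (x - y)"
    using A(2) A(5) by (smt (verit, best) distrib_right)
  moreover have "\<forall>x\<in>cball p r. \<bar>f x + g x\<bar> \<le> M1 + M2" using A by (smt (verit))
  ultimately show ?case using A by (intro exI[of _ "L1 + L2"] exI[of _ "M1 + M2"]) simp
next
  case (mult f g)
  then obtain L1 M1 L2 M2 where A: "L1 \<ge> 0" "\<forall>x\<in>cball p r. \<forall>y\<in>cball p r. \<bar>f x - f y\<bar> \<le> L1 * norm (x - y)"
      "\<forall>x\<in>cball p r. \<bar>f x\<bar> \<le> M1" "L2 \<ge> 0" "\<forall>x\<in>cball p r. \<forall>y\<in>cball p r. \<bar>g x - g y\<bar> \<le> L2 * norm (x - y)"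
      "\<forall>x\<in>cball p r. \<bar>g x\<bar> \<le> M2" by blast
  define M1' where "M1' = max M1 0"
  define M2' where "M2' = max M2 0"
  have "\<forall>x\<in>cball p r. \<forall>y\<in>cball p r. \<bar>f x * g x - f y * g y\<bar> \<le> (M1' * L2 + M2' * L1) * norm (x - y)"
  proof (intro ballI)
    fix x y assume xy: "x \<in> cball p r" "y \<in> cball p r"
    have e: "f x * g x - f y * g y = f x * (g x - g y) + g y * (f x - f y)" by (simp add: algebra_simps)
    have "\<bar>f x * (g x - g y)\<bar> \<le> M1' * (L2 * norm (x - y))"
      unfolding abs_mult using A xy by (intro mult_mono) (auto simp: M1'_def le_max_iff_disj)
    moreover have "\<bar>g y * (f x - f y)\<bar> \<le> M2' * (L1 * norm (x - y))"
      unfolding abs_mult using A xy by (intro mult_mono) (auto simp: M2'_def le_max_iff_disj)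
    ultimately show "\<bar>f x * g x - f y * g y\<bar> \<le> (M1' * L2 + M2' * L1) * norm (x - y)"
      unfolding e by (smt (verit, best) abs_triangle_ineq distrib_right mult.assoc)
  qed
  moreover have "\<forall>x\<in>cball p r. \<bar>f x * g x\<bar> \<le> M1' * M2'"
    unfolding abs_mult using A by (auto intro!: mult_mono simp: M1'_def M2'_def le_max_iff_disj)
  moreover have "M1' * L2 + M2' * L1 \<ge> 0" using A by (auto simp: M1'_def M2'_def)
  ultimately show ?case by blast
qed

lemma pvf_lip:
  fixes g :: "real^'n \<Rightarrow> real^'n"
  assumes "poly_vector_field g"
  shows "\<exists>L M. L > 0 \<and> (\<forall>x\<in>cball p r. \<forall>y\<in>cball p r. norm (g x - g y) \<le> L * norm (x - y))
           \<and> (\<forall>x\<in>cball p r. norm (g x) \<le> M)"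
proof -
  have "\<forall>i. \<exists>L M. L \<ge> 0 \<and> (\<forall>x\<in>cball p r. \<forall>y\<in>cball p r. \<bar>g x $ i - g y $ i\<bar> \<le> L * norm (x - y))
           \<and> (\<forall>x\<in>cball p r. \<bar>g x $ i\<bar> \<le> M)"
    using poly_fun_lip assms unfolding poly_vector_field_def by blast
  then obtain L M where LM: "\<And>i. L i \<ge> 0" "\<And>i. \<forall>x\<in>cball p r. \<forall>y\<in>cball p r. \<bar>g x $ i - g y $ i\<bar> \<le> L i * norm (x - y)"
    "\<And>i. \<forall>x\<in>cball p r. \<bar>g x $ i\<bar> \<le> M i" by metis
  have "\<forall>x\<in>cball p r. \<forall>y\<in>cball p r. norm (g x - g y) \<le> (1 + (\<Sum>i\<in>UNIV. L i)) * norm (x - y)"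
  proof (intro ballI)
    fix x y assume xy: "x \<in> cball p r" "y \<in> cball p r"
    have "norm (g x - g y) \<le> (\<Sum>i\<in>UNIV. \<bar>(g x - g y) $ i\<bar>)" by (rule norm_le_l1_cart)
    also have "\<dots> \<le> (\<Sum>i\<in>UNIV. L i * norm (x - y))"
      using LM(2) xy by (intro sum_mono) auto
    also have "\<dots> \<le> (1 + (\<Sum>i\<in>UNIV. L i)) * norm (x - y)"
      by (simp add: sum_distrib_right[symmetric] distrib_right)
    finally show "norm (g x - g y) \<le> (1 + (\<Sum>i\<in>UNIV. L i)) * norm (x - y)" .
  qed
  moreover have "\<forall>x\<in>cball p r. norm (g x) \<le> (\<Sum>i\<in>UNIV. M i)"
  proof
    fix x assume x: "x \<in> cball p r"
    have "norm (g x) \<le> (\<Sum>i\<in>UNIV. \<bar>g x $ i\<bar>)" by (rule norm_le_l1_cart)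
    also have "\<dots> \<le> (\<Sum>i\<in>UNIV. M i)" using LM(3) x by (intro sum_mono) auto
    finally show "norm (g x) \<le> (\<Sum>i\<in>UNIV. M i)" .
  qed
  moreover have "0 < 1 + (\<Sum>i\<in>UNIV. L i)" using LM(1) by (smt (verit) sum_nonneg)
  ultimately show ?thesis by blast
qed


lemma integral_deriv_nhd:
  fixes f :: "real \<Rightarrow> 'a::banach"
  assumes "continuous_on {0..} f" "t \<ge> 0"
  shows "((\<lambda>u. integral {0..u} f) has_vector_derivative f t) (at t within {0..})"
proof -
  have "continuous_on {0..t+1} f" using continuous_on_subset assms(1) by fastforce
  then have "((\<lambda>u. integral {0..u} f) has_vector_derivative f t) (at t within {0..t+1})"
    using integral_has_vector_derivative[of 0 "t+1" f t] assms(2) by auto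
  moreover have "at t within {0..t+1} = at t within {0..}"
    by (rule at_within_nhd[where S="{..<t+1}"]) auto
  ultimately show ?thesis by simp
qed

lemma integral_cont_nhd:
  fixes f :: "real \<Rightarrow> 'a::banach"
  assumes "continuous_on {0..} f"
  shows "continuous_on {0..} (\<lambda>u. integral {0..u} f)"
  using integral_deriv_nhd[OF assms] 
  by (meson atLeast_iff continuous_on_eq_continuous_within has_vector_derivative_continuous)

lemma exp_integral:
  fixes k :: real assumes "k > 0" "tt \<ge> 0"
  shows "integral {0..tt} (\<lambda>s. exp (k* s)) = (exp (k*tt) - 1) / k"
proof -
  have "((\<lambda>s. exp (k* s)) has_integral (exp (k*tt)/k - exp (k*0)/k)) {0..tt}"
    apply (rule fundamental_theorem_of_calculus)
    using assms apply simp
    using assms apply (auto intro!: derivative_eq_intros simp: has_real_derivative_iff_has_vector_derivative[symmetric])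
    done
  then show ?thesis using assms by (simp add: integral_unique diff_divide_distrib)
qed

lemma ode_exists:
  fixes G :: "real^'n \<Rightarrow> real^'n"
  assumes L: "L > 0" "\<And>x y. norm (G x - G y) \<le> L * norm (x - y)"
    and M: "\<And>x. norm (G x) \<le> M"
  shows "\<exists>x. x 0 = x0 \<and> (\<forall>t\<in>{0..}. (x has_vector_derivative G (x t)) (at t within {0..}))"
proof -
  define k where "k = 2*L"
  have k: "k > 0" using L by (simp add: k_def)
  have Gc: "continuous_on UNIV G"
    apply (rule lipschitz_on_continuous_on[of L])
    apply (rule lipschitz_onI) using L by (auto simp: dist_norm)
  have M0: "M \<ge> 0" using M[of 0] norm_ge_zero order_trans by blast
  define I where "I y u = integral {0..u} (\<lambda>s. G (exp (k* s) *\<^sub>R apply_bcontfun y s))" for y u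
  define \<Phi>0 where "\<Phi>0 y t = exp (-k*max 0 t) *\<^sub>R (x0 + I y (max 0 t))" for y t
  have contI: "continuous_on UNIV (\<lambda>s. G (exp (k* s) *\<^sub>R apply_bcontfun y s))" for y
    by (intro continuous_on_compose2[OF Gc] continuous_intros) auto
  have intI: "(\<lambda>s. G (exp (k* s) *\<^sub>R apply_bcontfun y s)) integrable_on {0..u}" for y u
    by (rule integrable_continuous_real) (rule continuous_on_subset[OF contI], simp)
  have Ibound: "norm (I y u) \<le> M * u" if "u \<ge> 0" for y u
    unfolding I_def using integral_bound[OF that continuous_on_subset[OF contI[of y]], of M] M by simp
  have Phi_in: "\<Phi>0 y \<in> bcontfun" for y
  proof (rule bcontfun_normI)
    have "continuous_on {0..} (\<lambda>u. exp (-k*u) *\<^sub>R (x0 + I y u))"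
      unfolding I_def
      by (intro continuous_intros integral_cont_nhd continuous_on_subset[OF contI]) auto
    then show "continuous_on UNIV (\<Phi>0 y)"
      unfolding \<Phi>0_def
      by (rule continuous_on_compose2) (auto intro!: continuous_intros)
    fix t :: real
    let ?u = "max 0 t"
    have u0: "?u \<ge> 0" by simp
    have e1: "exp (-k*?u) \<le> 1" using k u0 by simp
    have "exp (k*?u) \<ge> 1 + k*?u" by (rule exp_ge_add_one_self)
    then have "k*?u \<le> exp (k*?u)" by linarith
    then have e3: "exp (-k*?u) * (k*?u) \<le> 1" by (simp add: exp_minus field_simps)
    have "exp (-k*?u) * (M*?u) = (M/k) * (exp (-k*?u) * (k*?u))" using k by simp
    also have "\<dots> \<le> M/k" using e3 M0 k by (intro mult_left_le) auto
    finally have e2: "exp (-k*?u) * (M*?u) \<le> M / k" .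
    have "norm (\<Phi>0 y t) \<le> exp (-k*?u) * (norm x0 + norm (I y ?u))"
      unfolding \<Phi>0_def by (simp add: norm_triangle_ineq)
    also have "\<dots> \<le> exp (-k*?u) * (norm x0 + M*?u)"
      using Ibound[OF u0, of y] by (simp add: mult_left_mono)
    also have "\<dots> = exp (-k*?u) * norm x0 + exp (-k*?u) * (M*?u)"
      by (simp add: distrib_left)
    also have "\<dots> \<le> norm x0 + M/k"
      using e1 e2 mult_left_le_one_le[OF norm_ge_zero, of "exp (-k*?u)" x0] by simp
    finally show "norm (\<Phi>0 y t) \<le> norm x0 + M/k" .
  qed
  define \<Phi> where "\<Phi> y = Bcontfun (\<Phi>0 y)" for y
  have Phi_app: "apply_bcontfun (\<Phi> y) = \<Phi>0 y" for y
    unfolding \<Phi>_def using Phi_in by (simp add: Bcontfun_inverse)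
  have contr: "dist (\<Phi> y1) (\<Phi> y2) \<le> (1/2) * dist y1 y2" for y1 y2
  proof (rule dist_bound)
    fix t :: real
    let ?u = "max 0 t"
    let ?D = "dist y1 y2"
    have u0: "?u \<ge> 0" by simp
    have "norm (I y1 ?u - I y2 ?u) \<le> integral {0..?u} (\<lambda>s. L * ?D * exp (k* s))"
      unfolding I_def
      apply (subst integral_diff[symmetric, OF intI intI])
      apply (rule integral_norm_bound_integral)
        apply (rule integrable_diff[OF intI intI])
       apply (rule integrable_continuous_real, intro continuous_intros)
    proof -
      fix s assume s: "s \<in> {0..?u}"
      have "norm (G (exp (k* s) *\<^sub>R apply_bcontfun y1 s) - G (exp (k* s) *\<^sub>R apply_bcontfun y2 s))
          \<le> L * norm (exp (k* s) *\<^sub>R apply_bcontfun y1 s - exp (k* s) *\<^sub>R apply_bcontfun y2 s)"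
        by (rule L(2))
      also have "\<dots> = L * exp (k* s) * dist (apply_bcontfun y1 s) (apply_bcontfun y2 s)"
        by (simp add: dist_norm scaleR_diff_right[symmetric])
      also have "\<dots> \<le> L * exp (k* s) * ?D"
        using L(1) by (intro mult_left_mono dist_bounded) auto
      finally show "norm (G (exp (k* s) *\<^sub>R apply_bcontfun y1 s) - G (exp (k* s) *\<^sub>R apply_bcontfun y2 s))
          \<le> L * ?D * exp (k* s)" by (simp add: mult_ac)
    qed
    also have "\<dots> = L * ?D * ((exp (k*?u) - 1)/k)"
      using exp_integral[OF k u0] by simp
    also have "\<dots> = ?D/2 * (exp (k*?u) - 1)"
      using L(1) by (simp add: k_def field_simps)
    finally have A: "norm (I y1 ?u - I y2 ?u) \<le> ?D/2 * (exp (k*?u) - 1)" .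
    have "dist (\<Phi>0 y1 t) (\<Phi>0 y2 t) = exp (-k*?u) * norm (I y1 ?u - I y2 ?u)"
      unfolding \<Phi>0_def dist_norm by (simp add: scaleR_diff_right[symmetric])
    also have "\<dots> \<le> exp (-k*?u) * (?D/2 * (exp (k*?u) - 1))"
      using A by (simp add: mult_left_mono)
    also have "\<dots> = ?D/2 * (1 - exp (-k*?u))"
      by (simp add: field_simps exp_minus)
    also have "\<dots> \<le> ?D/2" by (intro mult_left_le) auto
    finally show "dist (apply_bcontfun (\<Phi> y1) t) (apply_bcontfun (\<Phi> y2) t) \<le> 1/2 * ?D"
      by (simp add: Phi_app)
  qed
  obtain y where y: "\<Phi> y = y" using banach_fix_type[of "1/2" \<Phi>] contr by auto
  define x where "x t = exp (k*t) *\<^sub>R apply_bcontfun y t" for t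
  have xeq: "x t = x0 + integral {0..t} (\<lambda>s. G (x s))" if "t \<ge> 0" for t
  proof -
    have "x t = exp (k*t) *\<^sub>R \<Phi>0 y t" unfolding x_def using y Phi_app by metis
    also have "\<dots> = x0 + I y t" using that by (simp add: \<Phi>0_def exp_minus field_simps)
    finally show ?thesis by (simp add: I_def x_def)
  qed
  have xc: "continuous_on {0..} (\<lambda>s. G (x s))"
    unfolding x_def by (intro continuous_on_compose2[OF Gc] continuous_intros) auto
  show ?thesis
  proof (intro exI conjI ballI)
    show "x 0 = x0" using xeq[of 0] by simp
    fix t :: real assume t: "t \<in> {0..}"
    have "((\<lambda>u. x0 + integral {0..u} (\<lambda>s. G (x s))) has_vector_derivative G (x t)) (at t within {0..})"
      using integral_deriv_nhd[OF xc] t by (auto intro!: derivative_eq_intros)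
    then show "(x has_vector_derivative G (x t)) (at t within {0..})"
      by (rule has_vector_derivative_transform[OF t, rotated]) (use xeq in auto)
  qed
qed


locale cons =
  fixes X :: "(real^'n) set" and c e :: "real^'n"
  assumes fin: "finite X" and nc: "norm c = 1" and ne: "norm e = 1" and ce: "c \<bullet> e = 0"
    and inj: "inj_on (\<lambda>p. c \<bullet> p) X"
begin

definition a where "a p = c \<bullet> p"
definition q1 :: "real^'n \<Rightarrow> real poly" where "q1 p = (\<Prod>j\<in>X-{p}. [:- a j, 1:])"
definition d where "d p = poly (q1 p) (a p)"
definition qr :: "real \<Rightarrow> real" where "qr t = (\<Prod>j\<in>X. t - a j)"
definition alpha where "alpha t = - (\<Sum>p\<in>X. poly (q1 p) t / (d p)^2)"
definition P :: "real \<Rightarrow> real^'n" where "P t = (\<Sum>p\<in>X. (poly (q1 p) t / d p) *\<^sub>R (p - a p *\<^sub>R c))"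
definition P' :: "real \<Rightarrow> real^'n" where "P' t = (\<Sum>p\<in>X. (poly (pderiv (q1 p)) t / d p) *\<^sub>R (p - a p *\<^sub>R c))"
definition s where "s y = c \<bullet> y"
definition Om where "Om y = y - s y *\<^sub>R c - P (s y)"
definition v where "v y = e \<bullet> Om y"
definition zeta where "zeta y = complex_of_real (s y) + \<i> * complex_of_real (v y)"
definition w where "w t = complex_of_real (alpha t) + \<i> * complex_of_real (qr t)"
definition F where "F y = (\<Prod>j\<in>X. zeta y - complex_of_real (a j)) * w (s y)"
definition g where "g y = Re (F y) *\<^sub>R c + Re (F y) *\<^sub>R P' (s y) + Im (F y) *\<^sub>R e - Om y + v y *\<^sub>R e"

lemma cc: "c \<bullet> c = 1" using nc by (simp add: dot_square_norm)
lemma ee: "e \<bullet> e = 1" using ne by (simp add: dot_square_norm)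

lemma poly_q1: "poly (q1 p) t = (\<Prod>j\<in>X-{p}. t - a j)"
  by (simp add: q1_def poly_prod)

lemma d_nz: "p \<in> X \<Longrightarrow> d p \<noteq> 0"
  unfolding d_def poly_q1 using fin inj by (auto simp: a_def inj_on_def)

lemma q1_zero: "p \<in> X \<Longrightarrow> j \<in> X \<Longrightarrow> j \<noteq> p \<Longrightarrow> poly (q1 p) (a j) = 0"
  unfolding poly_q1 using fin by (intro prod_zero) auto

lemma sum_delta_X:
  assumes "j \<in> X" "\<And>p. p \<in> X \<Longrightarrow> p \<noteq> j \<Longrightarrow> f p = 0"
  shows "(\<Sum>p\<in>X. f p) = f j"
  using assms fin by (simp add: sum.remove)

lemma P_at: "j \<in> X \<Longrightarrow> P (a j) = j - a j *\<^sub>R c"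
  unfolding P_def using d_nz q1_zero by (subst sum_delta_X[of j]) (auto simp: d_def)

lemma alpha_at: "j \<in> X \<Longrightarrow> alpha (a j) = - 1 / d j"
  unfolding alpha_def using d_nz q1_zero by (subst sum_delta_X[of j]) (auto simp: d_def power2_eq_square)

lemma cP: "c \<bullet> P t = 0"
  unfolding P_def by (simp add: inner_sum_right inner_diff_right cc a_def)

lemma cP': "c \<bullet> P' t = 0"
  unfolding P'_def by (simp add: inner_sum_right inner_diff_right cc a_def)

lemma cOm: "c \<bullet> Om y = 0"
  unfolding Om_def by (simp add: inner_diff_right cc cP s_def)

lemma w_nz: "w t \<noteq> 0"
proof
  assume "w t = 0"
  then have A: "alpha t = 0" "qr t = 0" unfolding w_def by (simp_all add: complex_eq_iff)
  then obtain j where j: "j \<in> X" "t = a j" unfolding qr_def using fin by auto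
  then show False using A alpha_at d_nz by auto
qed

lemma recon: "y = s y *\<^sub>R c + P (s y) + Om y"
  unfolding Om_def by simp

lemma Re_zeta: "Re (zeta y) = s y" and Im_zeta: "Im (zeta y) = v y"
  by (simp_all add: zeta_def)

lemma cg: "c \<bullet> g y = Re (F y)"
  unfolding g_def by (simp add: inner_diff_right inner_add_right cc cP' cOm ce)

lemma eOm: "e \<bullet> Om y = v y" by (simp add: v_def)

lemma g_zero: "g y = 0 \<Longrightarrow> y \<in> X"
proof -
  assume g0: "g y = 0"
  have R: "Re (F y) = 0" using cg[of y] g0 by simp
  then have g1: "g y = Im (F y) *\<^sub>R e - Om y + v y *\<^sub>R e" by (simp add: g_def)
  have "e \<bullet> g y = Im (F y)" unfolding g1 by (simp add: inner_diff_right inner_add_right ee eOm)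
  then have I: "Im (F y) = 0" using g0 by simp
  then have "F y = 0" using R by (simp add: complex_eq_iff)
  then obtain j where j: "j \<in> X" "zeta y = complex_of_real (a j)"
    unfolding F_def using w_nz fin by auto
  then have sv: "s y = a j" "v y = 0" using Re_zeta Im_zeta by (metis Re_complex_of_real Im_complex_of_real)+
  then have "Om y = 0" using g0 g1 I by simp
  then have "y = a j *\<^sub>R c + P (a j)" using recon[of y] sv by simp
  then show "y \<in> X" using P_at j by simp
qed

lemma s_at: "s j = a j" by (simp add: s_def a_def)

lemma Om_at: "j \<in> X \<Longrightarrow> Om j = 0"
  unfolding Om_def s_at P_at by simp

lemma zeta_at: "j \<in> X \<Longrightarrow> zeta j = complex_of_real (a j)"
  by (simp add: zeta_def v_def Om_at s_at)

lemma F_at: "j \<in> X \<Longrightarrow> F j = 0"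
  unfolding F_def using fin by (simp add: zeta_at prod_zero_iff) (metis)

lemma g_at: "j \<in> X \<Longrightarrow> g j = 0"
  by (simp add: g_def F_at Om_at v_def)

lemma pf_s: "poly_fun s" unfolding s_def by (rule poly_fun_inner)

lemma pf_poly_s: "poly_fun (\<lambda>y. poly Q (s y))" by (rule poly_fun_poly[OF pf_s])

lemma pf_P: "poly_fun (\<lambda>y. P (s y) $ i)"
  unfolding P_def sum_component
  by (auto intro!: poly_fun_sum fin poly_fun.mult poly_fun.const pf_poly_s simp: divide_inverse)

lemma pf_P': "poly_fun (\<lambda>y. P' (s y) $ i)"
  unfolding P'_def sum_component
  by (auto intro!: poly_fun_sum fin poly_fun.mult poly_fun.const pf_poly_s simp: divide_inverse)

lemma pf_Om: "poly_fun (\<lambda>y. Om y $ i)"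
  unfolding Om_def by (auto intro!: poly_fun_diff poly_fun.coord poly_fun.mult pf_s poly_fun.const pf_P)

lemma pf_v: "poly_fun v"
  unfolding v_def inner_vec_def by (auto intro!: poly_fun_sum poly_fun.mult poly_fun.const pf_Om)

lemma cpf_F: "cpf F"
proof -
  have z: "cpf zeta" unfolding zeta_def
    by (intro cpf_add cpf_mult cpf_of_real cpf_const pf_s pf_v)
  have al: "poly_fun (\<lambda>y. alpha (s y))" unfolding alpha_def
    by (auto intro!: poly_fun_neg poly_fun_sum fin poly_fun.mult poly_fun.const pf_poly_s simp: divide_inverse)
  have qq: "poly_fun (\<lambda>y. qr (s y))" unfolding qr_def
    by (auto intro!: poly_fun_prod fin poly_fun_diff poly_fun.const pf_s)
  show ?thesis unfolding F_def w_def
    by (intro cpf_mult cpf_prod fin cpf_diff z cpf_const cpf_add cpf_of_real al qq)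
qed

lemma pvf_g: "poly_vector_field g"
  unfolding poly_vector_field_def
proof
  fix i
  have "poly_fun (\<lambda>y. Re (F y))" "poly_fun (\<lambda>y. Im (F y))" using cpf_F by (auto simp: cpf_def)
  then show "poly_fun (\<lambda>y. g y $ i)"
    unfolding g_def
    by (auto intro!: poly_fun.add poly_fun_diff poly_fun.mult poly_fun.const pf_P' pf_Om pf_v)
qed

end

context cons begin

lemma P_deriv: "(P has_vector_derivative P' t) (at t)"
  unfolding P_def P'_def
  by (auto intro!: derivative_eq_intros poly_DERIV simp: has_real_derivative_iff_has_vector_derivative[symmetric] d_nz)

definition V where "V p y = (s y - a p)^2 + Om y \<bullet> Om y"
definition DV where "DV p y dd = 2*(s y - a p)*(c \<bullet> dd) + 2 * (Om y \<bullet> (dd - (c \<bullet> dd) *\<^sub>R c - (c \<bullet> dd) *\<^sub>R P' (s y)))"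

lemma deriv_V:
  assumes "(x has_vector_derivative dd) (at t)"
  shows "((\<lambda>t. V p (x t)) has_real_derivative DV p (x t) dd) (at t)"
proof -
  have sd: "((\<lambda>t. s (x t)) has_real_derivative c \<bullet> dd) (at t)"
  proof -
    have "((\<lambda>t. c \<bullet> x t) has_derivative (\<lambda>h. c \<bullet> (h *\<^sub>R dd))) (at t)"
      by (rule bounded_linear.has_derivative[OF bounded_linear_inner_right assms[unfolded has_vector_derivative_def]])
    then show ?thesis unfolding s_def has_real_derivative_iff_has_vector_derivative has_vector_derivative_def
      by (simp add: mult.commute)
  qed
  have Pd: "((\<lambda>t. P (s (x t))) has_vector_derivative (c \<bullet> dd) *\<^sub>R P' (s (x t))) (at t)"
    using vector_diff_chain_at[OF sd[unfolded has_real_derivative_iff_has_vector_derivative] P_deriv]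
    by (simp add: o_def)
  have Od: "((\<lambda>t. Om (x t)) has_vector_derivative (dd - (c \<bullet> dd) *\<^sub>R c - (c \<bullet> dd) *\<^sub>R P' (s (x t)))) (at t)"
    unfolding Om_def
    using assms Pd sd sd[unfolded has_real_derivative_iff_has_vector_derivative]
    by (auto intro!: derivative_eq_intros)
  define D where "D = dd - (c \<bullet> dd) *\<^sub>R c - (c \<bullet> dd) *\<^sub>R P' (s (x t))"
  have "((\<lambda>t. Om (x t) \<bullet> Om (x t)) has_derivative (\<lambda>h. Om (x t) \<bullet> (h *\<^sub>R D) + (h *\<^sub>R D) \<bullet> Om (x t))) (at t)"
    using has_derivative_inner[OF Od[unfolded has_vector_derivative_def D_def[symmetric]] Od[unfolded has_vector_derivative_def D_def[symmetric]]] .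
  moreover have "(\<lambda>h. Om (x t) \<bullet> (h *\<^sub>R D) + (h *\<^sub>R D) \<bullet> Om (x t)) = (*) (2 * (Om (x t) \<bullet> D))"
    by (auto simp: inner_commute algebra_simps)
  ultimately have O2: "((\<lambda>t. Om (x t) \<bullet> Om (x t)) has_real_derivative 2 * (Om (x t) \<bullet> D)) (at t)"
    by (simp add: has_field_derivative_def)
  have S2: "((\<lambda>t. (s (x t) - a p)^2) has_real_derivative 2*(s (x t) - a p)*(c \<bullet> dd)) (at t)"
    using sd by (auto intro!: derivative_eq_intros)
  show ?thesis
    unfolding V_def DV_def using DERIV_add[OF S2 O2] by (simp add: D_def)
qed

end


lemma mvt_nonpos:
  fixes f :: "real \<Rightarrow> real"
  assumes "a0 \<le> b" "continuous_on {a0..b} f"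
    "\<And>z. a0 < z \<Longrightarrow> z < b \<Longrightarrow> (f has_real_derivative f' z) (at z)"
    "\<And>z. a0 < z \<Longrightarrow> z < b \<Longrightarrow> f' z \<le> 0"
  shows "f b \<le> f a0"
proof (cases "a0 = b")
  case True then show ?thesis by simp
next
  case False
  then have ab: "a0 < b" using assms by simp
  have "\<And>z. a0 < z \<Longrightarrow> z < b \<Longrightarrow> f differentiable at z"
    using assms(3) real_differentiable_def by blast
  from MVT[OF ab assms(2) this] obtain l z where lz: "a0 < z" "z < b"
    "(f has_real_derivative l) (at z)" "f b - f a0 = (b - a0) * l" by blast
  then have "l = f' z" using DERIV_unique assms(3) by blast
  then have "l \<le> 0" using assms(4) lz by simp
  then have "(b - a0) * l \<le> 0" using ab by (simp add: mult_nonneg_nonpos)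
  then show ?thesis using lz by simp
qed

context cons begin

definition h where "h p y = (\<Prod>j\<in>X-{p}. zeta y - complex_of_real (a j)) * w (s y)"

lemma F_split: "p \<in> X \<Longrightarrow> F y = (zeta y - complex_of_real (a p)) * h p y"
  unfolding F_def h_def using fin by (simp add: prod.remove mult.assoc)

lemma V_nonneg: "V p y \<ge> 0" by (simp add: V_def)

lemma DV_g:
  assumes p: "p \<in> X" and R: "Re (h p y) \<le> -1/2"
  shows "DV p y (g y) \<le> - V p y"
proof -
  define \<sigma> where "\<sigma> = s y - a p"
  define vv where "vv = v y"
  define Ov where "Ov = Om y"
  have cg': "c \<bullet> g y = Re (F y)" by (rule cg)
  have gd: "g y - (c \<bullet> g y) *\<^sub>R c - (c \<bullet> g y) *\<^sub>R P' (s y) = Im (F y) *\<^sub>R e - Ov + vv *\<^sub>R e"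
    unfolding cg' by (simp add: g_def Ov_def vv_def algebra_simps)
  have eO: "Ov \<bullet> e = vv" by (simp add: Ov_def vv_def v_def inner_commute)
  have DVe: "DV p y (g y) = 2*(\<sigma>*Re (F y) + Im (F y)* vv) - 2*(Ov \<bullet> Ov) + 2* vv^2"
    unfolding DV_def gd unfolding cg' \<sigma>_def[symmetric] Ov_def[symmetric]
    by (simp add: inner_diff_right inner_add_right eO power2_eq_square algebra_simps)
  have z: "zeta y - complex_of_real (a p) = Complex \<sigma> vv"
    by (simp add: zeta_def \<sigma>_def vv_def complex_eq_iff)
  have ReF: "Re (F y) = \<sigma> * Re (h p y) - vv * Im (h p y)"
    and ImF: "Im (F y) = \<sigma> * Im (h p y) + vv * Re (h p y)"
    using F_split[OF p, of y] unfolding z by simp_all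
  have A: "\<sigma>*Re (F y) + Im (F y)* vv = (\<sigma>^2 + vv^2) * Re (h p y)"
    unfolding ReF ImF by (simp add: power2_eq_square algebra_simps)
  have "(\<sigma>^2 + vv^2) * Re (h p y) \<le> (\<sigma>^2 + vv^2) * (-1/2)"
    using R by (intro mult_left_mono) auto
  then have B: "\<sigma>*Re (F y) + Im (F y)* vv \<le> -(\<sigma>^2 + vv^2)/2" unfolding A by linarith
  have "\<bar>vv\<bar> \<le> norm Ov" using Cauchy_Schwarz_ineq2[of e Ov] ne by (simp add: vv_def v_def Ov_def)
  then have "vv^2 \<le> (norm Ov)^2" using power_mono[of "\<bar>vv\<bar>" "norm Ov" 2] by simp
  then have C: "vv^2 \<le> Ov \<bullet> Ov" by (simp add: dot_square_norm)
  have B2: "2*(\<sigma>*Re (F y) + Im (F y)* vv) \<le> -(\<sigma>^2 + vv^2)" using mult_left_mono[OF B, of 2] by simp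
  have "DV p y (g y) \<le> - (\<sigma>^2 + Ov \<bullet> Ov)" unfolding DVe using B2 C by linarith
  then show ?thesis by (simp add: V_def \<sigma>_def Ov_def)
qed

lemma h_at: "p \<in> X \<Longrightarrow> h p p = -1"
proof -
  assume p: "p \<in> X"
  have "(\<Prod>j\<in>X-{p}. zeta p - complex_of_real (a j)) = complex_of_real (d p)"
    by (simp add: zeta_at[OF p] d_def poly_q1)
  moreover have "qr (a p) = 0" unfolding qr_def using fin p by (intro prod_zero) auto
  ultimately show ?thesis
    unfolding h_def w_def s_at using alpha_at[OF p] d_nz[OF p]
    by (simp add: field_simps of_real_def)
qed

lemma isCont_P: "isCont P t"
  using P_deriv has_vector_derivative_continuous by blast

lemma isCont_Om: "isCont Om y"
proof -
  have "isCont (\<lambda>y. P (s y)) y" unfolding s_def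
    by (rule isCont_o2[OF _ isCont_P]) (intro continuous_intros)
  then show ?thesis unfolding Om_def[abs_def] s_def by (intro continuous_intros) auto
qed

lemma isCont_V: "isCont (V p) y"
  unfolding V_def[abs_def] s_def by (intro continuous_intros isCont_Om)

lemma isCont_h: "isCont (h p) y"
proof -
  have z: "isCont zeta y" unfolding zeta_def[abs_def] v_def s_def
    by (intro continuous_intros isCont_Om)
  show ?thesis unfolding h_def[abs_def] w_def alpha_def qr_def s_def
    by (intro continuous_intros z; simp add: d_nz)
qed

lemma h_near: "p \<in> X \<Longrightarrow> \<exists>r>0. \<forall>y. dist y p < r \<longrightarrow> Re (h p y) \<le> -1/2"
proof -
  assume p: "p \<in> X"
  obtain r where r: "r > 0" "\<And>y. dist y p < r \<Longrightarrow> dist (h p y) (h p p) < 1/2"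
    using isCont_h[of p p] unfolding continuous_at_eps_delta by (meson half_gt_zero zero_less_one)
  have "Re (h p y) \<le> -1/2" if "dist y p < r" for y
  proof -
    have "cmod (h p y + 1) < 1/2" using r(2)[OF that] h_at[OF p] by (simp add: dist_norm)
    moreover have "\<bar>Re (h p y + 1)\<bar> \<le> cmod (h p y + 1)" by (rule abs_Re_le_cmod)
    ultimately show ?thesis by simp
  qed
  then show ?thesis using r by auto
qed

lemma V_at: "p \<in> X \<Longrightarrow> V p p = 0"
  by (simp add: V_def s_at Om_at)

lemma V_cont_eps: "p \<in> X \<Longrightarrow> \<eta> > 0 \<Longrightarrow> \<exists>\<delta>>0. \<forall>x0. dist x0 p < \<delta> \<longrightarrow> V p x0 < \<eta>"
  using isCont_V[of p p] V_at unfolding continuous_at_eps_delta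
  by (metis dist_real_def diff_zero abs_less_iff)

lemma V_small:
  assumes p: "p \<in> X" and \<epsilon>: "\<epsilon> > 0"
  shows "\<exists>\<eta>>0. \<forall>y. V p y < \<eta> \<longrightarrow> dist y p < \<epsilon>"
proof -
  obtain \<delta> where \<delta>: "\<delta> > 0" "\<And>t. dist t (a p) < \<delta> \<Longrightarrow> dist (P t) (P (a p)) < \<epsilon>/3"
    using isCont_P[of "a p"] \<epsilon> unfolding continuous_at_eps_delta by (meson zero_less_divide_iff zero_less_numeral)
  define \<eta> where "\<eta> = min (\<delta>^2) ((\<epsilon>/3)^2)"
  have \<eta>: "\<eta> > 0" using \<delta> \<epsilon> by (simp add: \<eta>_def)
  have "dist y p < \<epsilon>" if V: "V p y < \<eta>" for y
  proof -
    define \<sigma> where "\<sigma> = s y - a p"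
    have s1: "\<sigma>^2 < \<delta>^2" "\<sigma>^2 < (\<epsilon>/3)^2" "Om y \<bullet> Om y < (\<epsilon>/3)^2"
      using V V_nonneg[of p y] unfolding V_def \<eta>_def \<sigma>_def
      by (smt (verit) inner_ge_zero zero_le_power2)+
    have a1: "\<bar>\<sigma>\<bar> < \<delta>" using power2_less_imp_less[of "\<bar>\<sigma>\<bar>" \<delta>] s1(1) \<delta>(1) by simp
    have a2: "\<bar>\<sigma>\<bar> < \<epsilon>/3" using power2_less_imp_less[of "\<bar>\<sigma>\<bar>" "\<epsilon>/3"] s1(2) \<epsilon> by simp
    have a3: "norm (Om y) < \<epsilon>/3" using power2_less_imp_less[of "norm (Om y)" "\<epsilon>/3"] s1(3) \<epsilon> by (simp add: dot_square_norm)
    have a4: "norm (P (s y) - P (a p)) < \<epsilon>/3" using \<delta>(2)[of "s y"] a1 by (simp add: dist_norm \<sigma>_def)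
    have "y - p = \<sigma> *\<^sub>R c + (P (s y) - P (a p)) + Om y"
      using recon[of y] P_at[OF p] by (simp add: \<sigma>_def algebra_simps)
    then have "norm (y - p) \<le> norm (\<sigma> *\<^sub>R c + (P (s y) - P (a p))) + norm (Om y)"
      by (simp add: norm_triangle_ineq)
    also have "\<dots> \<le> norm (\<sigma> *\<^sub>R c) + norm (P (s y) - P (a p)) + norm (Om y)"
      using norm_triangle_ineq by (intro add_right_mono) blast
    also have "norm (\<sigma> *\<^sub>R c) = \<bar>\<sigma>\<bar>" using nc by simp
    finally show ?thesis using a2 a3 a4 by (simp add: dist_norm)
  qed
  then show ?thesis using \<eta> by auto
qed

end

context cons begin

lemma lyap:
  fixes hh :: "real^'n \<Rightarrow> real^'n" and x :: "real \<Rightarrow> real^'n"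
  assumes cond: "\<And>y. dist y p < r \<Longrightarrow> DV p y (hh y) \<le> - V p y"
    and eta: "\<And>y. V p y < \<eta> \<Longrightarrow> dist y p < r"
    and T: "T \<ge> 0" and sol: "\<forall>t\<in>{0..T}. (x has_vector_derivative hh (x t)) (at t within {0..T})"
    and x0: "V p (x 0) < \<eta>"
  shows "\<forall>t\<in>{0..T}. V p (x t) \<le> V p (x 0) * exp (- t)"
proof -
  have xc: "continuous_on {0..T} x" unfolding continuous_on_eq_continuous_within
  proof
    fix t assume "t \<in> {0..T}"
    then show "continuous (at t within {0..T}) x" using sol has_vector_derivative_continuous by blast
  qed
  have Vc: "continuous_on UNIV (V p)" by (intro continuous_at_imp_continuous_on ballI isCont_V)
  have Vxc: "continuous_on {0..T} (\<lambda>t. V p (x t))" by (rule continuous_on_compose2[OF Vc xc]) auto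
  have der: "((\<lambda>t. V p (x t)) has_real_derivative DV p (x z) (hh (x z))) (at z)" if "0 < z" "z < T" for z
  proof -
    have A: "(x has_vector_derivative hh (x z)) (at z within {0..T})"
      using bspec[OF sol, of z] that by simp
    have B: "(x has_vector_derivative hh (x z)) (at z within {0<..<T})"
      by (rule has_vector_derivative_within_subset[OF A]) auto
    have "at z within {0<..<T} = at z" by (rule at_within_open) (use that in auto)
    then have "(x has_vector_derivative hh (x z)) (at z)" using B by simp
    then show ?thesis by (rule deriv_V)
  qed
  have below: "\<forall>t\<in>{0..T}. V p (x t) < \<eta>"
  proof (rule ccontr)
    assume nb: "\<not> (\<forall>t\<in>{0..T}. V p (x t) < \<eta>)"
    define C where "C = {0..T} \<inter> (\<lambda>t. V p (x t)) -` {\<eta>..}"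
    have Cne: "C \<noteq> {}" using nb by (auto simp: C_def not_less)
    have Ccl: "closed C" unfolding C_def by (rule continuous_closed_preimage[OF Vxc]) auto
    have Cbb: "bdd_below C" unfolding C_def by (auto intro: bdd_belowI[of _ 0])
    define t1 where "t1 = Inf C"
    have t1C: "t1 \<in> C" using closed_contains_Inf[OF Cne Cbb Ccl] t1_def by simp
    then have t1: "0 \<le> t1" "t1 \<le> T" "\<eta> \<le> V p (x t1)" by (auto simp: C_def)
    have lt: "V p (x t) < \<eta>" if "0 \<le> t" "t < t1" for t
    proof (rule ccontr)
      assume "\<not> V p (x t) < \<eta>" then have "t \<in> C" using that t1 by (auto simp: C_def)
      then have "t1 \<le> t" unfolding t1_def using Cbb by (rule cInf_lower)
      then show False using that by simp
    qed
    have "V p (x t1) \<le> V p (x 0)"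
    proof (rule mvt_nonpos[of 0 t1 _ "\<lambda>z. DV p (x z) (hh (x z))"])
      show "0 \<le> t1" by fact
      show "continuous_on {0..t1} (\<lambda>t. V p (x t))" using continuous_on_subset[OF Vxc] t1 by auto
      fix z assume z: "0 < z" "z < t1"
      show "((\<lambda>t. V p (x t)) has_real_derivative DV p (x z) (hh (x z))) (at z)" using der z t1 by simp
      have "V p (x z) < \<eta>" using lt z by simp
      then have "dist (x z) p < r" by (rule eta)
      then have "DV p (x z) (hh (x z)) \<le> - V p (x z)" by (rule cond)
      then show "DV p (x z) (hh (x z)) \<le> 0" using V_nonneg[of p "x z"] by simp
    qed
    then show False using t1 x0 by simp
  qed
  show ?thesis
  proof
    fix t assume t: "t \<in> {0..T}"
    have "exp t * V p (x t) \<le> exp 0 * V p (x 0)"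
    proof (rule mvt_nonpos[of 0 t _ "\<lambda>z. exp z * V p (x z) + DV p (x z) (hh (x z)) * exp z"])
      show "0 \<le> t" using t by simp
      show "continuous_on {0..t} (\<lambda>z. exp z * V p (x z))"
        by (intro continuous_intros continuous_on_subset[OF Vxc]) (use t in auto)
      fix z assume z: "0 < z" "z < t"
      show "((\<lambda>z. exp z * V p (x z)) has_real_derivative exp z * V p (x z) + DV p (x z) (hh (x z)) * exp z) (at z)"
        using DERIV_mult[OF DERIV_exp der[of z]] z t by simp
      have "dist (x z) p < r" using below z t eta by auto
      then have "DV p (x z) (hh (x z)) \<le> - V p (x z)" by (rule cond)
      then have "V p (x z) + DV p (x z) (hh (x z)) \<le> 0" by simp
      then have "exp z * (V p (x z) + DV p (x z) (hh (x z))) \<le> 0" by (simp add: mult_nonneg_nonpos)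
      then show "exp z * V p (x z) + DV p (x z) (hh (x z)) * exp z \<le> 0" by (simp add: algebra_simps)
    qed
    then show "V p (x t) \<le> V p (x 0) * exp (- t)" by (simp add: exp_minus field_simps)
  qed
qed

lemma stable:
  assumes p: "p \<in> X"
  shows "asymptotically_stable_equilibrium g p"
proof -
  obtain r0 where r0: "r0 > 0" "\<And>y. dist y p < r0 \<Longrightarrow> Re (h p y) \<le> -1/2" using h_near[OF p] by blast
  define r where "r = r0/2"
  have r: "r > 0" using r0 by (simp add: r_def)
  have condg: "DV p y (g y) \<le> - V p y" if "dist y p < r" for y
  proof -
    have "dist y p < r0" using that r0(1) by (simp add: r_def)
    then show ?thesis by (rule DV_g[OF p r0(2)])
  qed
  define K where "K = cball p r"
  define G where "G y = g (closest_point K y)" for y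
  have Kprops: "convex K" "closed K" "K \<noteq> {}" using r by (auto simp: K_def)
  have GK: "G y = g y" if "dist y p < r" for y
    using closest_point_self[of y K] that by (simp add: G_def K_def dist_commute)
  have condG: "DV p y (G y) \<le> - V p y" if "dist y p < r" for y
    using condg GK that by simp
  obtain L M where LM: "L > 0" "\<forall>x\<in>K. \<forall>y\<in>K. norm (g x - g y) \<le> L * norm (x - y)" "\<forall>x\<in>K. norm (g x) \<le> M"
    using pvf_lip[OF pvf_g, of p r] unfolding K_def by blast
  have Glip: "norm (G x - G y) \<le> L * norm (x - y)" for x y
  proof -
    have "norm (G x - G y) \<le> L * norm (closest_point K x - closest_point K y)"
      unfolding G_def using LM(2) closest_point_in_set[OF Kprops(2,3)] by blast
    also have "\<dots> \<le> L * norm (x - y)"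
      using closest_point_lipschitz[OF Kprops, of x y] LM(1) by (simp add: dist_norm)
    finally show ?thesis .
  qed
  have Gb: "norm (G x) \<le> M" for x unfolding G_def using LM(3) closest_point_in_set[OF Kprops(2,3)] by blast
  have exple: "V p z * exp (- t) \<le> V p z" if "t \<ge> 0" for z t
    using V_nonneg[of p z] that by (intro mult_left_le) auto
  have stab: "lyapunov_stable g p"
    unfolding lyapunov_stable_def
  proof (intro allI impI)
    fix \<epsilon> :: real assume \<epsilon>: "\<epsilon> > 0"
    obtain \<eta> where \<eta>: "\<eta> > 0" "\<And>y. V p y < \<eta> \<Longrightarrow> dist y p < min \<epsilon> r"
      using V_small[OF p, of "min \<epsilon> r"] \<epsilon> r by auto
    obtain \<delta> where \<delta>: "\<delta> > 0" "\<And>x0. dist x0 p < \<delta> \<Longrightarrow> V p x0 < \<eta>"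
      using V_cont_eps[OF p \<eta>(1)] by auto
    have etar: "dist y p < r" if "V p y < \<eta>" for y using \<eta>(2)[OF that] by simp
    have etae: "dist y p < \<epsilon>" if "V p y < \<eta>" for y using \<eta>(2)[OF that] by simp
    show "\<exists>\<delta>>0. \<forall>x0. dist x0 p < \<delta> \<longrightarrow> (\<exists>x. x 0 = x0 \<and> ode_solution_on g x {0..}) \<and>
        (\<forall>x T. 0 \<le> T \<longrightarrow> x 0 = x0 \<longrightarrow> ode_solution_on g x {0..T} \<longrightarrow> (\<forall>t\<in>{0..T}. dist (x t) p < \<epsilon>))"
    proof (intro exI[of _ \<delta>] conjI allI impI)
      show "\<delta> > 0" by fact
      fix x0 assume x0: "dist x0 p < \<delta>"
      have V0: "V p x0 < \<eta>" using \<delta> x0 by simp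
      obtain y where y: "y 0 = x0" "\<forall>t\<in>{0..}. (y has_vector_derivative G (y t)) (at t within {0..})"
        using ode_exists[OF LM(1) Glip Gb] by blast
      have ybd: "V p (y t) < \<eta>" if "t \<ge> 0" for t
      proof -
        have sol: "\<forall>\<tau>\<in>{0..t}. (y has_vector_derivative G (y \<tau>)) (at \<tau> within {0..t})"
          using y(2) by (auto intro: has_vector_derivative_within_subset[where S="{0..}"])
        have "V p (y t) \<le> V p (y 0) * exp (- t)"
          using lyap[OF condG etar that sol] y(1) V0 that by auto
        also have "\<dots> \<le> V p (y 0)" using exple that by simp
        finally show ?thesis using V0 y(1) by simp
      qed
      show "\<exists>x. x 0 = x0 \<and> ode_solution_on g x {0..}"
      proof (intro exI conjI)
        show "y 0 = x0" by fact
        show "ode_solution_on g y {0..}" unfolding ode_solution_on_def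
        proof
          fix t :: real assume t: "t \<in> {0..}"
          have "G (y t) = g (y t)" using GK etar ybd t by auto
          then show "(y has_vector_derivative g (y t)) (at t within {0..})" using y(2) t by metis
        qed
      qed
    next
      fix x0 x T assume x0: "dist x0 p < \<delta>" and T: "0 \<le> T" and xx0: "x 0 = x0"
        and sol: "ode_solution_on g x {0..T}"
      have V0: "V p x0 < \<eta>" using \<delta> x0 by simp
      show "\<forall>t\<in>{0..T}. dist (x t) p < \<epsilon>"
      proof
        fix t assume t: "t \<in> {0..T}"
        have "V p (x t) \<le> V p (x 0) * exp (- t)"
          using lyap[OF condg etar T sol[unfolded ode_solution_on_def]] xx0 V0 t by auto
        also have "\<dots> \<le> V p (x 0)" using exple t by simp
        finally have "V p (x t) < \<eta>" using V0 xx0 by simp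
        then show "dist (x t) p < \<epsilon>" by (rule etae)
      qed
    qed
  qed
  have attr: "attractive g p"
    unfolding attractive_def
  proof -
    obtain \<eta>0 where \<eta>0: "\<eta>0 > 0" "\<And>y. V p y < \<eta>0 \<Longrightarrow> dist y p < r" using V_small[OF p r] by auto
    obtain \<delta>0 where \<delta>0: "\<delta>0 > 0" "\<And>x0. dist x0 p < \<delta>0 \<Longrightarrow> V p x0 < \<eta>0"
      using V_cont_eps[OF p \<eta>0(1)] by auto
    show "\<exists>\<eta>>0. \<forall>x. dist (x 0) p < \<eta> \<longrightarrow> ode_solution_on g x {0..} \<longrightarrow> (x \<longlongrightarrow> p) at_top"
    proof (intro exI[of _ \<delta>0] conjI allI impI)
      show "\<delta>0 > 0" by fact
      fix x assume x0: "dist (x 0) p < \<delta>0" and sol: "ode_solution_on g x {0..}"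
      have V0: "V p (x 0) < \<eta>0" using \<delta>0 x0 by simp
      have dec: "V p (x t) \<le> V p (x 0) * exp (- t)" if "t \<ge> 0" for t
      proof -
        have sol': "\<forall>\<tau>\<in>{0..t}. (x has_vector_derivative g (x \<tau>)) (at \<tau> within {0..t})"
          using sol unfolding ode_solution_on_def
          by (auto intro: has_vector_derivative_within_subset[where S="{0..}"])
        show ?thesis using lyap[OF condg \<eta>0(2) that sol' V0] that by auto
      qed
      show "(x \<longlongrightarrow> p) at_top"
      proof (rule tendstoI)
        fix \<epsilon> :: real assume \<epsilon>: "\<epsilon> > 0"
        obtain \<eta> where \<eta>: "\<eta> > 0" "\<And>y. V p y < \<eta> \<Longrightarrow> dist y p < \<epsilon>" using V_small[OF p \<epsilon>] by auto
        define V0 where "V0 = V p (x 0)"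
        have V0nn: "V0 \<ge> 0" using V_nonneg by (simp add: V0_def)
        show "\<forall>\<^sub>F t in at_top. dist (x t) p < \<epsilon>"
          unfolding eventually_at_top_linorder
        proof (intro exI[of _ "V0/\<eta>"] allI impI)
          fix t assume t: "V0/\<eta> \<le> t"
          have t0: "t \<ge> 0" using t V0nn \<eta>(1) by (meson divide_nonneg_pos order_trans)
          have "V0 \<le> \<eta> * t" using t \<eta>(1) by (simp add: pos_divide_le_eq mult.commute)
          then have V0lt: "V0 < \<eta> * (1 + t)" using \<eta>(1) by (simp add: distrib_left)
          have "exp (- t) \<le> 1 / (1 + t)"
            using exp_ge_add_one_self[of t] t0 by (simp add: exp_minus field_simps)
          then have "V0 * exp (- t) \<le> V0 * (1 / (1 + t))" using V0nn by (rule mult_left_mono)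
          also have "\<dots> < \<eta>" using V0lt t0 by (simp add: pos_divide_less_eq mult.commute)
          finally have "V p (x t) < \<eta>" using dec[OF t0] V0_def by simp
          then show "dist (x t) p < \<epsilon>" by (rule \<eta>(2))
        qed
      qed
    qed
  qed
  show ?thesis unfolding asymptotically_stable_equilibrium_def using g_at[OF p] stab attr by simp
qed

end

lemma sep_vector:
  fixes D :: "(real^'n) set"
  shows "finite D \<Longrightarrow> 0 \<notin> D \<Longrightarrow> \<exists>c. \<forall>d\<in>D. c \<bullet> d \<noteq> 0"
proof (induction D rule: finite_induct)
  case empty then show ?case by simp
next
  case (insert d D)
  then obtain c where c: "\<forall>d'\<in>D. c \<bullet> d' \<noteq> 0" by auto
  have d0: "d \<noteq> 0" using insert by auto
  show ?case
  proof (cases "c \<bullet> d = 0")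
    case False then show ?thesis using c by auto
  next
    case True
    have fin: "finite (insert 0 ((\<lambda>d'. - (c \<bullet> d') / (d \<bullet> d')) ` D))" using insert by simp
    obtain t where t: "t \<notin> insert 0 ((\<lambda>d'. - (c \<bullet> d') / (d \<bullet> d')) ` D)"
      using ex_new_if_finite[OF infinite_UNIV_char_0 fin] by blast
    have "\<forall>d'\<in>insert d D. (c + t *\<^sub>R d) \<bullet> d' \<noteq> 0"
    proof
      fix d' assume d': "d' \<in> insert d D"
      show "(c + t *\<^sub>R d) \<bullet> d' \<noteq> 0"
      proof (cases "d' = d")
        case True
        then show ?thesis using \<open>c \<bullet> d = 0\<close> t d0 by (simp add: inner_add_left)
      next
        case False
        then have dD: "d' \<in> D" using d' by simp
        show ?thesis
        proof (cases "d \<bullet> d' = 0")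
          case True then show ?thesis using c dD by (simp add: inner_add_left)
        next
          case False
          show ?thesis
          proof
            assume "(c + t *\<^sub>R d) \<bullet> d' = 0"
            then have "c \<bullet> d' + t * (d \<bullet> d') = 0" by (simp add: inner_add_left)
            then have "t = - (c \<bullet> d') / (d \<bullet> d')" using False by (simp add: field_simps)
            then show False using t dD by auto
          qed
        qed
      qed
    qed
    then show ?thesis by blast
  qed
qed

lemma two_indices:
  assumes "CARD('n::finite) \<ge> 2"
  shows "\<exists>i j::'n. i \<noteq> j"
proof (rule ccontr)
  assume "\<not> ?thesis"
  then have "UNIV = {undefined::'n}" by auto
  then have "CARD('n) = 1" by (metis card.empty card_insert_disjoint empty_iff finite.emptyI One_nat_def)
  then show False using assms by simp
qed

lemma exists_ce:
  fixes X :: "(real^'n) set"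
  assumes "CARD('n) \<ge> 2" and fin: "finite X"
  shows "\<exists>c e::real^'n. norm c = 1 \<and> norm e = 1 \<and> c \<bullet> e = 0 \<and> inj_on (\<lambda>p. c \<bullet> p) X"
proof -
  obtain i j :: 'n where ij: "i \<noteq> j" using two_indices[OF assms(1)] by blast
  define D where "D = insert (axis i 1) ((\<lambda>(p,q). p - q) ` ((X \<times> X) - {z. fst z = snd z}))"
  have "finite D" unfolding D_def using fin by simp
  moreover have "0 \<notin> D" unfolding D_def by (auto simp: axis_eq_0_iff)
  ultimately obtain c1 where c1: "\<forall>d\<in>D. c1 \<bullet> d \<noteq> 0" using sep_vector by blast
  have c10: "c1 \<noteq> 0" using c1 unfolding D_def by auto
  define c where "c = c1 /\<^sub>R norm c1"
  have nc: "norm c = 1" using c10 by (simp add: c_def)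
  have inj: "inj_on (\<lambda>p. c \<bullet> p) X"
  proof (rule inj_onI)
    fix p q assume pq: "p \<in> X" "q \<in> X" "c \<bullet> p = c \<bullet> q"
    show "p = q"
    proof (rule ccontr)
      assume "p \<noteq> q"
      then have "p - q \<in> D" unfolding D_def using pq by force
      then have "c1 \<bullet> (p - q) \<noteq> 0" using c1 by blast
      moreover have "c1 \<bullet> (p - q) = norm c1 * (c \<bullet> p - c \<bullet> q)"
        using c10 by (simp add: c_def inner_diff_right right_diff_distrib mult.assoc[symmetric])
      ultimately show False using pq by simp
    qed
  qed
  define e0 where "e0 = c $ j *\<^sub>R axis i (1::real) - c $ i *\<^sub>R axis j 1"
  have ce0: "c \<bullet> e0 = 0" by (simp add: e0_def inner_diff_right inner_axis)
  show ?thesis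
  proof (cases "e0 = 0")
    case False
    define e where "e = e0 /\<^sub>R norm e0"
    have "norm e = 1" "c \<bullet> e = 0" using False ce0 by (auto simp: e_def)
    then show ?thesis using nc inj by blast
  next
    case True
    then have "e0 $ i = 0" "e0 $ j = 0" by simp_all
    then have "c $ j = 0" "c $ i = 0" using ij by (simp_all add: e0_def axis_def)
    then have "norm (axis i (1::real)) = 1" "c \<bullet> axis i 1 = 0" by (simp_all add: inner_axis)
    then show ?thesis using nc inj by blast
  qed
qed

theorem corollary1:
  fixes X :: "(real ^ 'n) set"
  assumes "CARD('n) \<ge> 2" and "finite X"
  shows "\<exists>g :: real ^ 'n \<Rightarrow> real ^ 'n. poly_vector_field g \<and>
           (\<forall>p\<in>X. asymptotically_stable_equilibrium g p) \<and>
           (\<forall>x. g x = 0 \<longrightarrow> x \<in> X)"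
proof -
  obtain c e :: "real^'n" where ce: "norm c = 1" "norm e = 1" "c \<bullet> e = 0" "inj_on (\<lambda>p. c \<bullet> p) X"
    using exists_ce[OF assms] by blast
  interpret cons X c e by unfold_locales (use ce assms in auto)
  show ?thesis using pvf_g stable g_zero by blast
qed


end
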